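(* Suppose that $D:=\sum_{j=0}^\infty\delta^+(j)<\infty$. Then for every $i\in\mathbb Z_+$, $$\mathbb E_i\exp\Big(\sum_{j=0}^\infty\delta^+(j)\ell(j)\Big)\le\sup_{j\in\mathbb Z_+}\mathbb E_i e^{D\ell(j)}\le\infty;$$ in particular, whenever the right-hand side is finite for every $i$, condition (C) holds and $f(i)\le\sup_{j}\mathbb E_i e^{D\ell(j)}$. If in addition, for every fixed $N\in\mathbb Z_+$, $\mathbb P_i\{X_n>N\text{ for all }n\ge0\}\to1$ as $i\to\infty$, and $\sup_{i\in\mathbb Z_+}\mathbb E_i e^{D\ell(i)}<\infty$, then $\limsup_{i\to\infty}f(i)\le1$.
   Context: Let $\mathbb Z_+=\{0,1,2,\dots\}$. Let $Q$ be a nonnegative transition kernel on $\mathbb Z_+$: $Q(i,j)\ge 0$ and $0<Q(i,\mathbb Z_+):=\sum_{j\ge0}Q(i,j)<\infty$ for every $i$, and $Q$ is irreducible. Let $P(i,j):=Q(i,j)/Q(i,\mathbb Z_+)$ and let $(X_n)_{n\ge0}$ be a Markov chain on $\mathbb Z_+$ with transition matrix $P$; $\mathbb P_i,\mathbb E_i$ denote probability and expectation given $X_0=i$. Let $\delta(j):=\log Q(j,\mathbb Z_+)$, $\delta^+:=\max(\delta,0)$. The local time at $j$ is $\ell(j):=\sum_{n=0}^\infty\mathbf 1\{X_n=j\}$. Condition (C): for every $i$, $\mathbb E_i\prod_{n=0}^\infty \max(Q(X_n,\mathbb Z_+),1)<\infty$ (equivalently $\mathbb E_i\exp(\sum_n\delta^+(X_n))<\infty$).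 Under (C) define $f(i):=\mathbb E_i\prod_{n=0}^\infty Q(X_n,\mathbb Z_+)\in[0,\infty)$. *)

theory Defs
  imports "HOL-Probability.Probability"
begin

definition Qtot :: "(nat \<Rightarrow> nat \<Rightarrow> real) \<Rightarrow> nat \<Rightarrow> real" where
  "Qtot Q i = (\<Sum>j. Q i j)"

definition Pker :: "(nat \<Rightarrow> nat \<Rightarrow> real) \<Rightarrow> nat \<Rightarrow> nat \<Rightarrow> real" where
  "Pker Q i j = Q i j / Qtot Q i"

definition delta :: "(nat \<Rightarrow> nat \<Rightarrow> real) \<Rightarrow> nat \<Rightarrow> real" where
  "delta Q j = ln (Qtot Q j)"

definition delta_plus :: "(nat \<Rightarrow> nat \<Rightarrow> real) \<Rightarrow> nat \<Rightarrow> real" where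
  "delta_plus Q j = max (delta Q j) 0"

definition nonneg_kernel :: "(nat \<Rightarrow> nat \<Rightarrow> real) \<Rightarrow> bool" where
  "nonneg_kernel Q \<longleftrightarrow>
     (\<forall>i j. 0 \<le> Q i j) \<and> (\<forall>i. summable (Q i)) \<and> (\<forall>i. 0 < Qtot Q i)"

definition irreducible_kernel :: "(nat \<Rightarrow> nat \<Rightarrow> real) \<Rightarrow> bool" where
  "irreducible_kernel Q \<longleftrightarrow> (\<forall>i j. (i, j) \<in> {(a, b). 0 < Q a b}\<^sup>*)"

text \<open>(M i, X i) is a Markov chain with transition matrix P started at i:
  its finite-dimensional distributions are the Markov ones.\<close>
definition markov_family ::
  "(nat \<Rightarrow> nat \<Rightarrow> real) \<Rightarrow> (nat \<Rightarrow> 'a measure) \<Rightarrow> (nat \<Rightarrow> nat \<Rightarrow> 'a \<Rightarrow> nat) \<Rightarrow> bool" where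
  "markov_family P M X \<longleftrightarrow>
     (\<forall>i. prob_space (M i) \<and>
        (\<forall>n. X i n \<in> measurable (M i) (count_space UNIV)) \<and>
        (\<forall>n xs. measure (M i) {\<omega> \<in> space (M i). \<forall>k\<le>n. X i k \<omega> = xs k}
                = (if xs 0 = i then 1 else 0) * (\<Prod>k<n. P (xs k) (xs (Suc k)))))"

definition local_time :: "(nat \<Rightarrow> 'a \<Rightarrow> nat) \<Rightarrow> nat \<Rightarrow> 'a \<Rightarrow> ennreal" where
  "local_time Y j \<omega> = (\<Sum>n. if Y n \<omega> = j then 1 else 0)"

definition eexp :: "ennreal \<Rightarrow> ennreal" where
  "eexp x = (if x = \<infinity> then \<infinity> else ennreal (exp (enn2real x)))"

definition prod_inf :: "(nat \<Rightarrow> real) \<Rightarrow> ennreal" where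
  "prod_inf a = lim (\<lambda>n. \<Prod>k<n. ennreal (a k))"

definition condC ::
  "(nat \<Rightarrow> nat \<Rightarrow> real) \<Rightarrow> (nat \<Rightarrow> 'a measure) \<Rightarrow> (nat \<Rightarrow> nat \<Rightarrow> 'a \<Rightarrow> nat) \<Rightarrow> bool" where
  "condC Q M X \<longleftrightarrow>
     (\<forall>i. (\<integral>\<^sup>+\<omega>. prod_inf (\<lambda>n. max (Qtot Q (X i n \<omega>)) 1) \<partial>M i) < \<infinity>)"

definition fval ::
  "(nat \<Rightarrow> nat \<Rightarrow> real) \<Rightarrow> (nat \<Rightarrow> 'a measure) \<Rightarrow> (nat \<Rightarrow> nat \<Rightarrow> 'a \<Rightarrow> nat) \<Rightarrow> nat \<Rightarrow> ennreal" where
  "fval Q M X i = (\<integral>\<^sup>+\<omega>. prod_inf (\<lambda>n. Qtot Q (X i n \<omega>)) \<partial>M i)"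

end

theory Submission
  imports Defs
begin

lemma eexp_ennreal: "0 \<le> r \<Longrightarrow> eexp (ennreal r) = ennreal (exp r)"
  by (simp add: eexp_def)

lemma eexp_0[simp]: "eexp 0 = 1"
  by (simp add: eexp_def)

lemma eexp_top[simp]: "eexp \<top> = \<top>"
  by (simp add: eexp_def)

lemma eexp_cases: obtains "x = \<top>" | r where "0 \<le> r" "x = ennreal r"
  by (cases x) auto

lemma eexp_mono: "x \<le> y \<Longrightarrow> eexp x \<le> eexp (y::ennreal)"
proof (cases y rule: eexp_cases)
  case 1 then show ?thesis by simp
next
  case (2 s)
  assume "x \<le> y"
  then obtain r where "0 \<le> r" "x = ennreal r" "r \<le> s" using 2
    by (metis ennreal_cases ennreal_le_iff top.extremum_uniqueI ennreal_neq_top)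
  then show ?thesis using 2 by (simp add: eexp_ennreal)
qed

lemma eexp_ge_1: "1 \<le> eexp x"
  by (cases x rule: eexp_cases) (auto simp: eexp_ennreal)

lemma eexp_ge_1_plus: "1 + x \<le> eexp x"
proof (cases x rule: eexp_cases)
  case (2 r)
  then have "ennreal (1 + r) \<le> ennreal (exp r)" by (intro ennreal_leI) (simp add: exp_ge_add_one_self)
  then show ?thesis using 2 by (simp add: eexp_ennreal ennreal_plus)
qed simp

lemma eexp_ge: "x \<le> eexp x"
  by (rule order_trans[OF _ eexp_ge_1_plus]) simp

lemma eexp_eq_top_iff: "eexp x = \<top> \<longleftrightarrow> x = \<top>"
  by (cases x rule: eexp_cases) (auto simp: eexp_ennreal)

lemma measurable_eexp[measurable]: "eexp \<in> borel_measurable borel"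
  unfolding eexp_def by measurable

lemma measurable_eexp'[measurable (raw)]: "f \<in> borel_measurable M \<Longrightarrow> (\<lambda>x. eexp (f x)) \<in> borel_measurable M"
  using measurable_compose[OF _ measurable_eexp] by blast

lemma eexp_SUP:
  assumes "incseq y"
  shows "eexp (SUP n. y n) = (SUP n. eexp (y n))"
proof (rule antisym)
  show "(SUP n. eexp (y n)) \<le> eexp (SUP n. y n)"
    by (rule SUP_least) (intro eexp_mono SUP_upper, simp)
next
  show "eexp (SUP n. y n) \<le> (SUP n. eexp (y n))"
  proof (cases "(SUP n. y n) = \<top>")
    case True
    have "(SUP n. y n) \<le> (SUP n. eexp (y n))" by (rule SUP_mono) (auto intro: eexp_ge)
    then show ?thesis using True by (metis eexp_top top_unique order_refl)
  next
    case False
    then obtain Y where Y: "0 \<le> Y" "(SUP n. y n) = ennreal Y" by (cases "SUP n. y n") auto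
    have ntop: "y n \<noteq> \<top>" for n
      using SUP_upper[of n UNIV y] Y by (auto simp: top_unique)
    have "y \<longlonglongrightarrow> (SUP n. y n)" by (rule LIMSEQ_SUP[OF assms])
    then have "(\<lambda>n. enn2real (y n)) \<longlonglongrightarrow> Y" using Y
      by (metis ennreal_neq_top enn2real_ennreal tendsto_enn2real)
    then have "(\<lambda>n. ennreal (exp (enn2real (y n)))) \<longlonglongrightarrow> ennreal (exp Y)"
      by (intro tendsto_ennrealI tendsto_exp)
    moreover have "(\<lambda>n. ennreal (exp (enn2real (y n)))) = (\<lambda>n. eexp (y n))"
      using ntop by (auto simp: eexp_def)
    moreover have "incseq (\<lambda>n. eexp (y n))"
      using assms by (auto simp: incseq_def intro: eexp_mono)
    ultimately have "ennreal (exp Y) = (SUP n. eexp (y n))"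
      using LIMSEQ_SUP LIMSEQ_unique by metis
    then show ?thesis using Y by (simp add: eexp_ennreal)
  qed
qed

lemma eexp_jensen:
  fixes p :: "nat \<Rightarrow> real" and y :: "nat \<Rightarrow> ennreal"
  assumes p: "\<And>j. 0 \<le> p j" and ps: "p sums 1"
  shows "eexp (\<Sum>j. ennreal (p j) * y j) \<le> (\<Sum>j. ennreal (p j) * eexp (y j))"
proof (cases "(\<Sum>j. ennreal (p j) * y j) = \<top>")
  case True
  have "(\<Sum>j. ennreal (p j) * y j) \<le> (\<Sum>j. ennreal (p j) * eexp (y j))"
    by (intro suminf_le mult_left_mono eexp_ge) auto
  then show ?thesis using True by (simp add: top_unique)
next
  case False
  then obtain r where r: "0 \<le> r" "(\<Sum>j. ennreal (p j) * y j) = ennreal r"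
    by (cases "\<Sum>j. ennreal (p j) * y j") auto
  define e where "e = exp r"
  have e: "0 < e" by (simp add: e_def)
  have trm: "ennreal (p j * e) * (1 + y j) \<le> ennreal (p j) * eexp (y j) + ennreal (p j * e * r)" for j
  proof (cases "y j" rule: eexp_cases)
    case 1
    show ?thesis
    proof (cases "p j = 0")
      case False
      then have "ennreal (p j) \<noteq> 0" using p[of j] by simp
      then show ?thesis using 1 by (simp add: ennreal_mult_top)
    qed simp
  next
    case (2 s)
    have "1 + (s - r) \<le> exp (s - r)" by (rule exp_ge_add_one_self)
    then have "e * (1 + (s - r)) \<le> e * exp (s - r)" using e by (intro mult_left_mono) auto
    also have "e * exp (s - r) = exp s" by (simp add: e_def exp_diff)
    finally have "e * (1 + s) \<le> exp s + e * r" by (simp add: algebra_simps)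
    then have "p j * (e * (1 + s)) \<le> p j * (exp s + e * r)" using p[of j] by (rule mult_left_mono)
    then have le: "p j * e * (1 + s) \<le> p j * exp s + p j * e * r" by (simp add: algebra_simps)
    have "ennreal (p j * e) * (1 + y j) = ennreal (p j * e * (1 + s))"
      using 2 p[of j] e by (simp add: ennreal_mult ennreal_plus)
    also have "\<dots> \<le> ennreal (p j * exp s + p j * e * r)" using le by (rule ennreal_leI)
    also have "\<dots> = ennreal (p j) * eexp (y j) + ennreal (p j * e * r)"
      using 2 p[of j] e r by (simp add: eexp_ennreal ennreal_mult ennreal_plus)
    finally show ?thesis .
  qed
  have s1: "(\<Sum>j. ennreal (p j)) = 1"
  proof -
    have "(\<lambda>j. ennreal (p j)) sums ennreal 1" using ps p by (subst sums_ennreal) auto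
    then show ?thesis by (simp add: sums_iff)
  qed
  have s2: "(\<Sum>j. ennreal (p j * e * r)) = ennreal (e * r)"
  proof -
    have "(\<lambda>j. p j * e * r) sums (1 * e * r)" by (intro sums_mult2 ps)
    then have "(\<lambda>j. ennreal (p j * e * r)) sums ennreal (e * r)" using p e r
      by (subst sums_ennreal) auto
    then show ?thesis by (simp add: sums_iff)
  qed
  have s3: "(\<Sum>j. ennreal (p j * e) * (1 + y j)) = ennreal e + ennreal (e * r)"
  proof -
    have "(\<Sum>j. ennreal (p j * e) * (1 + y j)) = (\<Sum>j. ennreal e * (ennreal (p j) + ennreal (p j) * y j))"
      using p e by (intro suminf_cong) (simp add: ennreal_mult algebra_simps)
    also have "\<dots> = ennreal e * ((\<Sum>j. ennreal (p j)) + (\<Sum>j. ennreal (p j) * y j))"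
      by (simp add: suminf_add[symmetric])
    also have "\<dots> = ennreal e + ennreal (e * r)" using s1 r e
      by (simp add: ennreal_mult algebra_simps)
    finally show ?thesis .
  qed
  have "ennreal e + ennreal (e * r) \<le> (\<Sum>j. ennreal (p j) * eexp (y j) + ennreal (p j * e * r))"
    unfolding s3[symmetric] by (intro suminf_le trm) auto
  also have "\<dots> = (\<Sum>j. ennreal (p j) * eexp (y j)) + ennreal (e * r)"
    by (simp add: suminf_add[symmetric] s2)
  finally have "ennreal (e * r) + ennreal e \<le> ennreal (e * r) + (\<Sum>j. ennreal (p j) * eexp (y j))"
    by (simp add: algebra_simps)
  then have "ennreal e \<le> (\<Sum>j. ennreal (p j) * eexp (y j))"
    by (simp add: ennreal_add_left_cancel_le)
  then show ?thesis using r by (simp add: eexp_ennreal e_def)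
qed


lemma max_exp_ln: assumes "0 < (q::real)" shows "max q 1 = exp (max (ln q) 0)"
proof (cases "1 \<le> q")
  case True
  then have "0 \<le> ln q" by (rule ln_ge_zero)
  then show ?thesis using True \<open>0 < q\<close> by (simp add: max_def)
next
  case False
  then have "ln q < 0" using \<open>0 < q\<close> by simp
  then show ?thesis using False by (simp add: max_def)
qed

lemma lim_incseq_ennreal: "incseq (f :: nat \<Rightarrow> ennreal) \<Longrightarrow> lim f = (SUP n. f n)"
  by (rule limI) (rule LIMSEQ_SUP)

lemma prod_inf_max:
  assumes q: "\<And>n. 0 < q n"
  shows "prod_inf (\<lambda>n. max (q n) 1) = eexp (\<Sum>n. ennreal (max (ln (q n)) 0))"
proof -
  define u where "u n = max (ln (q n)) 0" for n
  have u: "0 \<le> u n" for n by (simp add: u_def)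
  have eq: "(\<Prod>k<n. ennreal (max (q k) 1)) = eexp (\<Sum>k<n. ennreal (u k))" for n
  proof -
    have "(\<Prod>k<n. ennreal (max (q k) 1)) = (\<Prod>k<n. ennreal (exp (u k)))"
      using q by (simp add: max_exp_ln u_def)
    also have "\<dots> = ennreal (exp (\<Sum>k<n. u k))"
      by (simp add: prod_ennreal exp_sum)
    also have "\<dots> = eexp (\<Sum>k<n. ennreal (u k))"
      using u by (simp add: sum_ennreal eexp_ennreal sum_nonneg)
    finally show ?thesis .
  qed
  have inc: "incseq (\<lambda>n. \<Sum>k<n. ennreal (u k))"
    by (intro incseq_SucI) simp
  have "prod_inf (\<lambda>n. max (q n) 1) = lim (\<lambda>n. eexp (\<Sum>k<n. ennreal (u k)))"
    by (simp add: prod_inf_def eq)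
  also have "\<dots> = (SUP n. eexp (\<Sum>k<n. ennreal (u k)))"
    using inc by (intro lim_incseq_ennreal) (auto simp: incseq_def intro: eexp_mono)
  also have "\<dots> = eexp (SUP n. \<Sum>k<n. ennreal (u k))"
    by (rule eexp_SUP[OF inc, symmetric])
  also have "\<dots> = eexp (\<Sum>n. ennreal (u n))"
    by (simp add: suminf_eq_SUP)
  finally show ?thesis by (simp add: u_def)
qed

lemma prod_inf_le_max:
  assumes q: "\<And>n. 0 < q n" and fin: "(\<Sum>n. ennreal (max (ln (q n)) 0)) \<noteq> \<top>"
  shows "prod_inf q \<le> prod_inf (\<lambda>n. max (q n) 1)"
proof -
  define u where "u n = max (ln (q n)) 0" for n
  have u: "0 \<le> u n" for n by (simp add: u_def)
  have su: "summable u"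
    by (rule summable_suminf_not_top[OF u]) (use fin in \<open>simp add: u_def\<close>)
  define A where "A n = (\<Prod>k<n. max (q k) 1)" for n
  define B where "B n = (\<Prod>k<n. min (q k) 1)" for n
  have A: "A n = exp (\<Sum>k<n. u k)" for n
  proof -
    have "A n = (\<Prod>k<n. exp (u k))" unfolding A_def u_def by (intro prod.cong refl max_exp_ln q)
    then show ?thesis by (simp add: exp_sum)
  qed
  have "(\<lambda>n. \<Sum>k<n. u k) \<longlonglongrightarrow> suminf u" using su by (rule summable_LIMSEQ)
  then have LA: "A \<longlonglongrightarrow> exp (suminf u)" unfolding A by (rule tendsto_exp)
  have q': "0 \<le> q n" for n using q[of n] by simp
  have B0: "0 \<le> B n" for n unfolding B_def by (intro prod_nonneg) (simp add: q')
  have B1: "B n \<le> 1" for n unfolding B_def by (intro prod_le_1) (simp_all add: q')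
  have decB: "decseq B"
  proof (rule decseq_SucI)
    fix n
    have "B (Suc n) = B n * min (q n) 1" by (simp add: B_def)
    also have "\<dots> \<le> B n * 1" using B0[of n] by (intro mult_left_mono) auto
    finally show "B (Suc n) \<le> B n" by simp
  qed
  obtain LB where LB: "B \<longlonglongrightarrow> LB"
    using decseq_convergent[OF decB, of 0] B0 by blast
  have LB1: "LB \<le> 1" using LB B1 by (intro LIMSEQ_le_const2) auto
  have mm: "max a 1 * min a 1 = a" for a :: real by (simp add: max_def min_def)
  have AB: "A n * B n = (\<Prod>k<n. q k)" for n
    unfolding A_def B_def prod.distrib[symmetric] mm ..
  have "(\<lambda>n. A n * B n) \<longlonglongrightarrow> exp (suminf u) * LB" using LA LB by (rule tendsto_mult)
  then have "(\<lambda>n. ennreal (\<Prod>k<n. q k)) \<longlonglongrightarrow> ennreal (exp (suminf u) * LB)"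
    unfolding AB by (rule tendsto_ennrealI)
  then have "(\<lambda>n. \<Prod>k<n. ennreal (q k)) \<longlonglongrightarrow> ennreal (exp (suminf u) * LB)"
    by (simp add: prod_ennreal q')
  then have P1: "prod_inf q = ennreal (exp (suminf u) * LB)"
    unfolding prod_inf_def by (rule limI)
  have "(\<lambda>n. ennreal (A n)) \<longlonglongrightarrow> ennreal (exp (suminf u))" using LA by (rule tendsto_ennrealI)
  then have "(\<lambda>n. \<Prod>k<n. ennreal (max (q k) 1)) \<longlonglongrightarrow> ennreal (exp (suminf u))"
    by (simp only: A_def prod_ennreal[symmetric] max.coboundedI2 zero_le_one)
  then have P2: "prod_inf (\<lambda>n. max (q n) 1) = ennreal (exp (suminf u))"
    unfolding prod_inf_def by (rule limI)
  have "exp (suminf u) * LB \<le> exp (suminf u) * 1" using LB1 by (intro mult_left_mono) auto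
  then show ?thesis unfolding P1 P2 by (intro ennreal_leI) simp
qed

lemma suminf_local_swap:
  fixes Y :: "nat \<Rightarrow> nat" and c :: "nat \<Rightarrow> real"
  assumes c: "\<And>j. 0 \<le> c j"
  shows "(\<Sum>j. ennreal (c j) * (\<Sum>n. if Y n = j then 1 else 0)) = (\<Sum>n. ennreal (c (Y n)))"
proof -
  have "(\<Sum>j. ennreal (c j) * (\<Sum>n. if Y n = j then 1 else 0))
      = (\<Sum>j. \<Sum>n. ennreal (c j) * (if Y n = j then 1 else 0))"
    by (simp only: ennreal_suminf_cmult)
  also have "\<dots> = (\<integral>\<^sup>+j. \<integral>\<^sup>+n. ennreal (c j) * (if Y n = j then 1 else 0) \<partial>count_space UNIV \<partial>count_space UNIV)"
    by (simp only: nn_integral_count_space_nat)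
  also have "\<dots> = (\<integral>\<^sup>+n. \<integral>\<^sup>+j. ennreal (c j) * (if Y n = j then 1 else 0) \<partial>count_space UNIV \<partial>count_space UNIV)"
    by (intro nn_integral_count_space_nn_integral countableI_type borel_measurable_count_space)
  also have "\<dots> = (\<Sum>n. \<Sum>j. ennreal (c j) * (if Y n = j then 1 else 0))"
    by (simp only: nn_integral_count_space_nat)
  also have "\<dots> = (\<Sum>n. ennreal (c (Y n)))"
  proof (rule suminf_cong)
    fix n
    have "(\<Sum>j. ennreal (c j) * (if Y n = j then 1 else 0)) = (\<Sum>j\<in>{Y n}. ennreal (c j) * (if Y n = j then 1 else 0))"
      by (rule suminf_finite) auto
    then show "(\<Sum>j. ennreal (c j) * (if Y n = j then 1 else 0)) = ennreal (c (Y n))" by simp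
  qed
  finally show ?thesis .
qed


definition pth :: "(nat \<Rightarrow> 'a \<Rightarrow> nat) \<Rightarrow> nat \<Rightarrow> nat \<Rightarrow> 'a \<Rightarrow> nat list" where
  "pth Y s m \<omega> = map (\<lambda>k. Y (s + k) \<omega>) [0..<m]"

lemma length_pth[simp]: "length (pth Y s m \<omega>) = m"
  by (simp add: pth_def)

lemma pth_eq_iff: "pth Y s m \<omega> = xs \<longleftrightarrow> length xs = m \<and> (\<forall>k<m. Y (s + k) \<omega> = xs ! k)"
  by (auto simp: pth_def list_eq_iff_nth_eq)

lemma sets_pth:
  assumes Y: "\<And>n. Y n \<in> measurable N (count_space UNIV)"
  shows "{\<omega> \<in> space N. pth Y s m \<omega> = xs} \<in> sets N"
proof -
  note Y[measurable]
  have "{\<omega> \<in> space N. pth Y s m \<omega> = xs} = {\<omega> \<in> space N. length xs = m \<and> (\<forall>k. k < m \<longrightarrow> Y (s + k) \<omega> = xs ! k)}"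
    by (auto simp: pth_eq_iff)
  also have "\<dots> \<in> sets N" by measurable
  finally show ?thesis .
qed

lemma measurable_pth:
  assumes Y: "\<And>n. Y n \<in> measurable N (count_space UNIV)"
  shows "pth Y s m \<in> measurable N (count_space UNIV)"
proof (subst measurable_count_space_eq2_countable, safe)
  fix a
  have "pth Y s m -` {a} \<inter> space N = {\<omega> \<in> space N. pth Y s m \<omega> = a}" by auto
  then show "pth Y s m -` {a} \<inter> space N \<in> sets N" using sets_pth[OF Y] by simp
qed simp_all

lemma prod_split_add:
  "(\<Prod>k<t + n. f k) = (\<Prod>k<t. f k) * (\<Prod>k<n. f (t + k)) " for f :: "nat \<Rightarrow> real"
  by (induction n) (simp_all add: algebra_simps)

lemma nth_last_Suc: "length xs = Suc t \<Longrightarrow> xs ! t = last xs"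
  using last_conv_nth[of xs] by (cases "xs = []") auto

lemma mf_prob: "markov_family P M X \<Longrightarrow> prob_space (M i)"
  by (simp add: markov_family_def)

lemma mf_meas: "markov_family P M X \<Longrightarrow> X i n \<in> measurable (M i) (count_space UNIV)"
  by (simp add: markov_family_def)

lemma cyl_measure:
  assumes mf: "markov_family P M X" and len: "length zs = Suc n"
  shows "measure (M i) {\<omega>\<in>space (M i). pth (X i) 0 (Suc n) \<omega> = zs}
       = (if zs ! 0 = i then 1 else 0) * (\<Prod>k<n. P (zs ! k) (zs ! Suc k))"
proof -
  have "{\<omega>\<in>space (M i). pth (X i) 0 (Suc n) \<omega> = zs} = {\<omega> \<in> space (M i). \<forall>k\<le>n. X i k \<omega> = (\<lambda>k. zs ! k) k}"
    using len by (auto simp: pth_eq_iff less_Suc_eq_le)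
  then show ?thesis using mf unfolding markov_family_def by simp
qed

lemma joint_measure:
  assumes mf: "markov_family P M X" and lx: "length xs = Suc t" and ly: "length ys = Suc n"
  shows "measure (M i) {\<omega>\<in>space (M i). pth (X i) 0 (Suc t) \<omega> = xs \<and> pth (X i) t (Suc n) \<omega> = ys}
       = measure (M i) {\<omega>\<in>space (M i). pth (X i) 0 (Suc t) \<omega> = xs}
         * measure (M (last xs)) {\<omega>\<in>space (M (last xs)). pth (X (last xs)) 0 (Suc n) \<omega> = ys}"
proof (cases "ys ! 0 = last xs")
  case False
  have E: "{\<omega>\<in>space (M i). pth (X i) 0 (Suc t) \<omega> = xs \<and> pth (X i) t (Suc n) \<omega> = ys} = {}"
  proof -
    { fix \<omega> assume "pth (X i) 0 (Suc t) \<omega> = xs" "pth (X i) t (Suc n) \<omega> = ys"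
      then have "X i t \<omega> = xs ! t" "X i t \<omega> = ys ! 0" by (auto simp: pth_eq_iff)
      moreover have "xs ! t = last xs" using lx last_conv_nth[of xs] by (cases "xs = []") auto
      ultimately have False using False by simp }
    then show ?thesis by blast
  qed
  show ?thesis unfolding E using cyl_measure[OF mf ly, of "last xs"] False by simp
next
  case True
  define z where "z k = (if k \<le> t then xs ! k else ys ! (k - t))" for k
  have zt: "z (t + k) = ys ! k" for k
    using True lx nth_last_Suc[OF lx] by (cases k) (auto simp: z_def)
  have "{\<omega>\<in>space (M i). pth (X i) 0 (Suc t) \<omega> = xs \<and> pth (X i) t (Suc n) \<omega> = ys}
      = {\<omega> \<in> space (M i). \<forall>k\<le>t+n. X i k \<omega> = z k}"
  proof (rule set_eqI, rule iffI)
    fix \<omega> assume "\<omega> \<in> {\<omega>\<in>space (M i). pth (X i) 0 (Suc t) \<omega> = xs \<and> pth (X i) t (Suc n) \<omega> = ys}"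
    then have \<omega>: "\<omega> \<in> space (M i)" "pth (X i) 0 (Suc t) \<omega> = xs" "pth (X i) t (Suc n) \<omega> = ys" by auto
    have "X i k \<omega> = z k" if k: "k \<le> t + n" for k
    proof (cases "k \<le> t")
      case True then show ?thesis using \<omega> by (auto simp: pth_eq_iff z_def)
    next
      case False
      then obtain m where "k = t + m" "m \<le> n" using k by (metis add_le_cancel_left le_add_diff_inverse nat_le_linear)
      then show ?thesis using \<omega> zt[of m] by (auto simp: pth_eq_iff)
    qed
    then show "\<omega> \<in> {\<omega> \<in> space (M i). \<forall>k\<le>t+n. X i k \<omega> = z k}" using \<omega> by auto
  next
    fix \<omega> assume "\<omega> \<in> {\<omega> \<in> space (M i). \<forall>k\<le>t+n. X i k \<omega> = z k}"
    then have \<omega>: "\<omega> \<in> space (M i)" "\<forall>k\<le>t+n. X i k \<omega> = z k" by auto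
    have "pth (X i) 0 (Suc t) \<omega> = xs" using \<omega> lx by (auto simp: pth_eq_iff z_def)
    moreover have "pth (X i) t (Suc n) \<omega> = ys" using \<omega> ly zt by (auto simp: pth_eq_iff)
    ultimately show "\<omega> \<in> {\<omega>\<in>space (M i). pth (X i) 0 (Suc t) \<omega> = xs \<and> pth (X i) t (Suc n) \<omega> = ys}"
      using \<omega> by auto
  qed
  then have "measure (M i) {\<omega>\<in>space (M i). pth (X i) 0 (Suc t) \<omega> = xs \<and> pth (X i) t (Suc n) \<omega> = ys}
      = (if z 0 = i then 1 else 0) * (\<Prod>k<t+n. P (z k) (z (Suc k)))"
    using mf unfolding markov_family_def by simp
  also have "(\<Prod>k<t+n. P (z k) (z (Suc k))) = (\<Prod>k<t. P (z k) (z (Suc k))) * (\<Prod>k<n. P (z (t + k)) (z (Suc (t + k))))"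
    by (simp add: prod_split_add)
  also have "(\<Prod>k<t. P (z k) (z (Suc k))) = (\<Prod>k<t. P (xs ! k) (xs ! Suc k))"
    by (intro prod.cong) (auto simp: z_def)
  also have "(\<Prod>k<n. P (z (t + k)) (z (Suc (t + k)))) = (\<Prod>k<n. P (ys ! k) (ys ! Suc k))"
    using zt by (intro prod.cong) (auto simp flip: add_Suc_right)
  also have "z 0 = xs ! 0" by (simp add: z_def)
  finally show ?thesis
    using cyl_measure[OF mf lx, of i] cyl_measure[OF mf ly, of "last xs"] True by simp
qed

lemma nn_integral_by_values:
  fixes p :: "'a \<Rightarrow> 'b::countable"
  assumes sets: "\<And>x. {\<omega>\<in>space M. p \<omega> = x} \<in> sets M"
  shows "(\<integral>\<^sup>+\<omega>. F (p \<omega>) \<partial>M) = (\<integral>\<^sup>+x. F x * emeasure M {\<omega>\<in>space M. p \<omega> = x} \<partial>count_space UNIV)"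
proof -
  have "(\<integral>\<^sup>+\<omega>. F (p \<omega>) \<partial>M) = (\<integral>\<^sup>+\<omega>. \<integral>\<^sup>+x. F x * indicator {\<omega>\<in>space M. p \<omega> = x} \<omega> \<partial>count_space UNIV \<partial>M)"
  proof (rule nn_integral_cong)
    fix \<omega> assume "\<omega> \<in> space M"
    then have "(\<integral>\<^sup>+x. F x * indicator {\<omega>\<in>space M. p \<omega> = x} \<omega> \<partial>count_space UNIV)
        = (\<Sum>x\<in>{p \<omega>}. F x * indicator {\<omega>\<in>space M. p \<omega> = x} \<omega>)"
      by (intro nn_integral_count_space') (auto split: split_indicator)
    also have "\<dots> = F (p \<omega>)" using \<open>\<omega> \<in> space M\<close> by simp
    finally show "F (p \<omega>) = (\<integral>\<^sup>+x. F x * indicator {\<omega>\<in>space M. p \<omega> = x} \<omega> \<partial>count_space UNIV)" ..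
  qed
  also have "\<dots> = (\<integral>\<^sup>+x. \<integral>\<^sup>+\<omega>. F x * indicator {\<omega>\<in>space M. p \<omega> = x} \<omega> \<partial>M \<partial>count_space UNIV)"
    by (intro nn_integral_count_space_nn_integral countableI_type borel_measurable_times_ennreal
        borel_measurable_const borel_measurable_indicator sets)
  also have "\<dots> = (\<integral>\<^sup>+x. F x * emeasure M {\<omega>\<in>space M. p \<omega> = x} \<partial>count_space UNIV)"
    by (intro nn_integral_cong nn_integral_cmult_indicator sets)
  finally show ?thesis .
qed

lemma nn_integral_count_prod_mult:
  fixes f :: "'a::countable \<Rightarrow> ennreal" and h :: "'b::countable \<Rightarrow> ennreal"
  shows "(\<integral>\<^sup>+z. f (fst z) * h (snd z) \<partial>count_space UNIV)
       = (\<integral>\<^sup>+x. f x \<partial>count_space UNIV) * (\<integral>\<^sup>+y. h y \<partial>count_space UNIV)"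
proof -
  have meas: "(\<lambda>z. f (fst z) * h (snd z)) \<in> borel_measurable (count_space UNIV \<Otimes>\<^sub>M count_space UNIV)"
    by (simp add: pair_measure_countable)
  have "(\<integral>\<^sup>+z. f (fst z) * h (snd z) \<partial>count_space UNIV)
      = (\<integral>\<^sup>+z. f (fst z) * h (snd z) \<partial>(count_space UNIV \<Otimes>\<^sub>M count_space UNIV))"
    by (rule nn_integral_count_space_prod_eq[symmetric])
  also have "\<dots> = (\<integral>\<^sup>+x. \<integral>\<^sup>+y. f x * h y \<partial>count_space UNIV \<partial>count_space UNIV)"
    using sigma_finite_measure.nn_integral_fst[OF sigma_finite_measure_count_space meas] by simp
  also have "\<dots> = (\<integral>\<^sup>+x. f x * (\<integral>\<^sup>+y. h y \<partial>count_space UNIV) \<partial>count_space UNIV)"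
    by (intro nn_integral_cong nn_integral_cmult) simp
  also have "\<dots> = (\<integral>\<^sup>+x. f x \<partial>count_space UNIV) * (\<integral>\<^sup>+y. h y \<partial>count_space UNIV)"
    by (rule nn_integral_multc) simp
  finally show ?thesis .
qed


lemma markov_split:
  assumes mf: "markov_family P M X"
    and a: "\<And>xs. length xs = Suc t \<Longrightarrow> a xs \<noteq> 0 \<Longrightarrow> last xs = j"
  shows "(\<integral>\<^sup>+\<omega>. a (pth (X i) 0 (Suc t) \<omega>) * g (pth (X i) t (Suc n) \<omega>) \<partial>M i)
       = (\<integral>\<^sup>+\<omega>. a (pth (X i) 0 (Suc t) \<omega>) \<partial>M i) * (\<integral>\<^sup>+\<omega>. g (pth (X j) 0 (Suc n) \<omega>) \<partial>M j)"
proof -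
  interpret Pi: prob_space "M i" by (rule mf_prob[OF mf])
  interpret Pj: prob_space "M j" by (rule mf_prob[OF mf])
  note measi = mf_meas[OF mf, of i] and measj = mf_meas[OF mf, of j]
  define p where "p \<omega> = (pth (X i) 0 (Suc t) \<omega>, pth (X i) t (Suc n) \<omega>)" for \<omega>
  define Ei where "Ei xs = emeasure (M i) {\<omega>\<in>space (M i). pth (X i) 0 (Suc t) \<omega> = xs}" for xs
  define Ej where "Ej ys = emeasure (M j) {\<omega>\<in>space (M j). pth (X j) 0 (Suc n) \<omega> = ys}" for ys
  have pset: "{\<omega>\<in>space (M i). p \<omega> = (xs, ys)} = {\<omega>\<in>space (M i). pth (X i) 0 (Suc t) \<omega> = xs}
       \<inter> {\<omega>\<in>space (M i). pth (X i) t (Suc n) \<omega> = ys}" for xs ys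
    by (auto simp: p_def)
  have sets_p: "{\<omega>\<in>space (M i). p \<omega> = z} \<in> sets (M i)" for z
  proof -
    obtain xs ys where z: "z = (xs, ys)" by (cases z)
    show ?thesis unfolding z pset
      by (intro sets.Int sets_pth measi)
  qed
  have "(\<integral>\<^sup>+\<omega>. a (pth (X i) 0 (Suc t) \<omega>) * g (pth (X i) t (Suc n) \<omega>) \<partial>M i)
      = (\<integral>\<^sup>+\<omega>. (\<lambda>z. a (fst z) * g (snd z)) (p \<omega>) \<partial>M i)"
    by (simp add: p_def)
  also have "\<dots> = (\<integral>\<^sup>+z. a (fst z) * g (snd z) * emeasure (M i) {\<omega>\<in>space (M i). p \<omega> = z} \<partial>count_space UNIV)"
    by (rule nn_integral_by_values[OF sets_p])
  also have "\<dots> = (\<integral>\<^sup>+z. (a (fst z) * Ei (fst z)) * (g (snd z) * Ej (snd z)) \<partial>count_space UNIV)"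
  proof (rule nn_integral_cong)
    fix z :: "nat list \<times> nat list"
    obtain xs ys where z: "z = (xs, ys)" by (cases z)
    have "a xs * g ys * emeasure (M i) {\<omega>\<in>space (M i). p \<omega> = (xs, ys)} = a xs * Ei xs * (g ys * Ej ys)"
    proof (cases "length xs = Suc t \<and> length ys = Suc n \<and> a xs \<noteq> 0")
      case False
      then consider "length xs \<noteq> Suc t" | "length ys \<noteq> Suc n" | "a xs = 0" by blast
      then show ?thesis
      proof cases
        case 1
        then have E: "{\<omega>\<in>space (M i). pth (X i) 0 (Suc t) \<omega> = xs} = {}" by (auto simp: pth_eq_iff)
        show ?thesis unfolding pset Ei_def E by simp
      next
        case 2
        then have E: "{\<omega>\<in>space (M i). pth (X i) t (Suc n) \<omega> = ys} = {}" "{\<omega>\<in>space (M j). pth (X j) 0 (Suc n) \<omega> = ys} = {}"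
          by (auto simp: pth_eq_iff)
        show ?thesis unfolding pset Ej_def E by simp
      qed simp
    next
      case True
      then have lx: "length xs = Suc t" and ly: "length ys = Suc n" and lj: "last xs = j"
        using a by auto
      have "emeasure (M i) {\<omega>\<in>space (M i). p \<omega> = (xs, ys)}
          = ennreal (measure (M i) {\<omega>\<in>space (M i). pth (X i) 0 (Suc t) \<omega> = xs \<and> pth (X i) t (Suc n) \<omega> = ys})"
        by (simp add: Pi.emeasure_eq_measure p_def)
      also have "\<dots> = ennreal (measure (M i) {\<omega>\<in>space (M i). pth (X i) 0 (Suc t) \<omega> = xs}
         * measure (M j) {\<omega>\<in>space (M j). pth (X j) 0 (Suc n) \<omega> = ys})"
        using joint_measure[OF mf lx ly, of i] lj by simp
      also have "\<dots> = Ei xs * Ej ys"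
        by (simp add: Ei_def Ej_def Pi.emeasure_eq_measure Pj.emeasure_eq_measure ennreal_mult)
      finally show ?thesis by (simp add: mult_ac)
    qed
    then show "a (fst z) * g (snd z) * emeasure (M i) {\<omega>\<in>space (M i). p \<omega> = z} = a (fst z) * Ei (fst z) * (g (snd z) * Ej (snd z))"
      by (simp add: z)
  qed
  also have "\<dots> = (\<integral>\<^sup>+xs. a xs * Ei xs \<partial>count_space UNIV) * (\<integral>\<^sup>+ys. g ys * Ej ys \<partial>count_space UNIV)"
    by (rule nn_integral_count_prod_mult)
  also have "(\<integral>\<^sup>+xs. a xs * Ei xs \<partial>count_space UNIV) = (\<integral>\<^sup>+\<omega>. a (pth (X i) 0 (Suc t) \<omega>) \<partial>M i)"
    unfolding Ei_def by (rule nn_integral_by_values[symmetric]) (intro sets_pth measi)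
  also have "(\<integral>\<^sup>+ys. g ys * Ej ys \<partial>count_space UNIV) = (\<integral>\<^sup>+\<omega>. g (pth (X j) 0 (Suc n) \<omega>) \<partial>M j)"
    unfolding Ej_def by (rule nn_integral_by_values[symmetric]) (intro sets_pth measj)
  finally show ?thesis .
qed


definition fh :: "nat \<Rightarrow> nat \<Rightarrow> nat list \<Rightarrow> ennreal" where
  "fh j t xs = of_bool (length xs = Suc t \<and> last xs = j \<and> j \<notin> set (butlast xs))"

lemma fh_last: "length xs = Suc t \<Longrightarrow> fh j t xs \<noteq> 0 \<Longrightarrow> last xs = j"
  by (simp add: fh_def)

lemma fh_take:
  assumes "t < length p"
  shows "fh j t (take (Suc t) p) = of_bool (p ! t = j \<and> (\<forall>k<t. p ! k \<noteq> j))"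
proof -
  have tk: "take (Suc t) p = take t p @ [p ! t]" using assms by (rule take_Suc_conv_app_nth)
  have "j \<notin> set (take t p) \<longleftrightarrow> (\<forall>k<t. p ! k \<noteq> j)"
    using assms by (auto simp: in_set_conv_nth)
  then show ?thesis using assms unfolding fh_def tk by auto
qed

lemma sum_fh:
  fixes c :: "nat \<Rightarrow> ennreal"
  shows "(\<Sum>t<length p. fh j t (take (Suc t) p) * c t) = (if j \<in> set p then c (LEAST t. p ! t = j) else 0)"
proof (cases "j \<in> set p")
  case False
  have "fh j t (take (Suc t) p) = 0" if "t < length p" for t
    using False that by (auto simp: fh_take)
  then show ?thesis using False by simp
next
  case True
  define t0 where "t0 = (LEAST t. p ! t = j)"
  obtain t1 where t1: "t1 < length p" "p ! t1 = j" using True by (auto simp: in_set_conv_nth)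
  have t0: "p ! t0 = j" unfolding t0_def by (rule LeastI[of _ t1]) (rule t1(2))
  have t0le: "t0 \<le> t1" unfolding t0_def by (rule Least_le) (rule t1(2))
  have before: "p ! k \<noteq> j" if "k < t0" for k using that not_less_Least t0_def by blast
  have eq: "fh j t (take (Suc t) p) * c t = (if t = t0 then c t else 0)" if "t < length p" for t
  proof -
    have "(p ! t = j \<and> (\<forall>k<t. p ! k \<noteq> j)) \<longleftrightarrow> t = t0"
    proof
      assume h: "p ! t = j \<and> (\<forall>k<t. p ! k \<noteq> j)"
      then have "t0 \<le> t" unfolding t0_def by (intro Least_le) simp
      moreover have "\<not> t0 < t" using h t0 by auto
      ultimately show "t = t0" by simp
    qed (use t0 before in auto)
    then show ?thesis using that by (simp add: fh_take)
  qed
  have "(\<Sum>t<length p. fh j t (take (Suc t) p) * c t) = (\<Sum>t<length p. if t = t0 then c t else 0)"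
    by (intro sum.cong) (simp_all add: eq)
  also have "\<dots> = c t0" using t0le t1 by simp
  finally show ?thesis using True by (simp add: t0_def)
qed

lemma count_drop_least:
  assumes "j \<in> set p"
  shows "count_list p j = count_list (drop (LEAST t. p ! t = j) p) j"
proof -
  define t0 where "t0 = (LEAST t. p ! t = j)"
  have before: "p ! k \<noteq> j" if "k < t0" for k using that not_less_Least t0_def by blast
  have "j \<notin> set (take t0 p)" using before by (auto simp: in_set_conv_nth)
  then have "count_list (take t0 p) j = 0" by simp
  moreover have "count_list p j = count_list (take t0 p) j + count_list (drop t0 p) j"
    by (metis append_take_drop_id count_list_append)
  ultimately show ?thesis by (simp add: t0_def)
qed

lemma eexp_count_decomp:
  fixes p :: "nat list" and D :: ennreal
  shows "eexp (D * of_nat (count_list p j))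
    = of_bool (j \<notin> set p) + (\<Sum>t<length p. fh j t (take (Suc t) p) * eexp (D * of_nat (count_list (drop t p) j)))"
  by (cases "j \<in> set p") (simp_all add: sum_fh count_drop_least[symmetric])

lemma sum_fh_one: "(\<Sum>t<length p. fh j t (take (Suc t) p)) = of_bool (j \<in> set p)"
  using sum_fh[where p=p and j=j and c="\<lambda>_. 1"] by simp

lemma take_pth: "t < N \<Longrightarrow> take (Suc t) (pth Y 0 N \<omega>) = pth Y 0 (Suc t) \<omega>"
  by (simp add: pth_def take_map)

lemma drop_pth: "drop t (pth Y 0 N \<omega>) = pth Y t (N - t) \<omega>"
  by (auto simp: pth_def list_eq_iff_nth_eq)

lemma pth_0[simp]: "pth Y s 0 \<omega> = []"
  by (simp add: pth_def)

lemma pth_Suc: "pth Y s (Suc N) \<omega> = pth Y s N \<omega> @ [Y (s + N) \<omega>]"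
  by (simp add: pth_def)

lemma partial_count:
  "(\<Sum>n<N. if Y n \<omega> = j then 1 else 0 :: ennreal) = of_nat (count_list (pth Y 0 N \<omega>) j)"
  by (induction N) (simp_all add: pth_Suc)

lemma local_time_SUP:
  "local_time Y j \<omega> = (SUP N. of_nat (count_list (pth Y 0 N \<omega>) j))"
  unfolding local_time_def suminf_eq_SUP partial_count ..

lemma count_mono: "incseq (\<lambda>N. of_nat (count_list (pth Y 0 N \<omega>) j) :: ennreal)"
  by (intro incseq_SucI) (simp add: pth_Suc)

lemma count_le_local: "of_nat (count_list (pth Y 0 N \<omega>) j) \<le> local_time Y j \<omega>"
  unfolding local_time_SUP by (rule SUP_upper) simp


lemma meas_pth_fun:
  assumes mf: "markov_family P M X"
  shows "(\<lambda>\<omega>. F (pth (X i) s m \<omega>) :: ennreal) \<in> borel_measurable (M i)"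
  using measurable_compose[OF measurable_pth[OF mf_meas[OF mf]] borel_measurable_count_space] .

lemma sets_hit:
  assumes mf: "markov_family P M X"
  shows "{\<omega>\<in>space (M i). \<exists>n. X i n \<omega> = j} \<in> sets (M i)"
proof -
  note [measurable] = mf_meas[OF mf, of i]
  show ?thesis by measurable
qed

lemma hit_bound_N:
  assumes mf: "markov_family P M X"
  shows "(\<integral>\<^sup>+\<omega>. eexp (ennreal D * of_nat (count_list (pth (X i) 0 N \<omega>) j)) \<partial>M i)
    \<le> 1 + emeasure (M i) {\<omega>\<in>space (M i). \<exists>n. X i n \<omega> = j}
          * (\<integral>\<^sup>+\<omega>. eexp (ennreal D * local_time (X j) j \<omega>) \<partial>M j)"
proof -
  interpret Pi: prob_space "M i" by (rule mf_prob[OF mf])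
  define B where "B = (\<integral>\<^sup>+\<omega>. eexp (ennreal D * local_time (X j) j \<omega>) \<partial>M j)"
  define H where "H = emeasure (M i) {\<omega>\<in>space (M i). \<exists>n. X i n \<omega> = j}"
  define g where "g ys = eexp (ennreal D * of_nat (count_list ys j))" for ys
  have pw: "eexp (ennreal D * of_nat (count_list (pth (X i) 0 N \<omega>) j))
     = of_bool (j \<notin> set (pth (X i) 0 N \<omega>))
       + (\<Sum>t<N. fh j t (pth (X i) 0 (Suc t) \<omega>) * g (pth (X i) t (N - t) \<omega>))" for \<omega>
    using eexp_count_decomp[where D="ennreal D" and j=j and p="pth (X i) 0 N \<omega>"]
    by (simp add: take_pth drop_pth g_def)
  have m1: "(\<lambda>\<omega>. of_bool (j \<notin> set (pth (X i) 0 N \<omega>)) :: ennreal) \<in> borel_measurable (M i)"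
    by (rule meas_pth_fun[OF mf, where F="\<lambda>ys. of_bool (j \<notin> set ys)"])
  have m2: "(\<lambda>\<omega>. fh j t (pth (X i) 0 (Suc t) \<omega>) * g (pth (X i) t (N - t) \<omega>)) \<in> borel_measurable (M i)" for t
    by (intro borel_measurable_times_ennreal meas_pth_fun[OF mf, where F="fh j t"] meas_pth_fun[OF mf, where F=g])
  have S: "(\<integral>\<^sup>+\<omega>. (\<Sum>t<N. fh j t (pth (X i) 0 (Suc t) \<omega>) * g (pth (X i) t (N - t) \<omega>)) \<partial>M i)
      = (\<Sum>t<N. \<integral>\<^sup>+\<omega>. fh j t (pth (X i) 0 (Suc t) \<omega>) * g (pth (X i) t (N - t) \<omega>) \<partial>M i)"
    by (rule nn_integral_sum) (rule m2)
  have "(\<integral>\<^sup>+\<omega>. eexp (ennreal D * of_nat (count_list (pth (X i) 0 N \<omega>) j)) \<partial>M i)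
      = (\<integral>\<^sup>+\<omega>. of_bool (j \<notin> set (pth (X i) 0 N \<omega>)) \<partial>M i)
        + (\<integral>\<^sup>+\<omega>. (\<Sum>t<N. fh j t (pth (X i) 0 (Suc t) \<omega>) * g (pth (X i) t (N - t) \<omega>)) \<partial>M i)"
    unfolding pw by (rule nn_integral_add[OF m1]) (rule borel_measurable_sum, rule m2)
  also have "\<dots> = (\<integral>\<^sup>+\<omega>. of_bool (j \<notin> set (pth (X i) 0 N \<omega>)) \<partial>M i)
        + (\<Sum>t<N. \<integral>\<^sup>+\<omega>. fh j t (pth (X i) 0 (Suc t) \<omega>) * g (pth (X i) t (N - t) \<omega>) \<partial>M i)"
    unfolding S ..
  also have "\<dots> \<le> 1 + (\<Sum>t<N. (\<integral>\<^sup>+\<omega>. fh j t (pth (X i) 0 (Suc t) \<omega>) \<partial>M i) * B)"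
  proof (rule add_mono)
    have "(\<integral>\<^sup>+\<omega>. of_bool (j \<notin> set (pth (X i) 0 N \<omega>)) \<partial>M i) \<le> (\<integral>\<^sup>+\<omega>. 1 \<partial>M i)"
      by (intro nn_integral_mono) simp
    then show "(\<integral>\<^sup>+\<omega>. of_bool (j \<notin> set (pth (X i) 0 N \<omega>)) \<partial>M i) \<le> 1"
      by (simp add: Pi.emeasure_space_1)
  next
    show "(\<Sum>t<N. \<integral>\<^sup>+\<omega>. fh j t (pth (X i) 0 (Suc t) \<omega>) * g (pth (X i) t (N - t) \<omega>) \<partial>M i)
        \<le> (\<Sum>t<N. (\<integral>\<^sup>+\<omega>. fh j t (pth (X i) 0 (Suc t) \<omega>) \<partial>M i) * B)"
    proof (rule sum_mono)
      fix t assume "t \<in> {..<N}"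
      then obtain n where Nt: "N - t = Suc n" by (metis Suc_diff_Suc lessThan_iff)
      have "(\<integral>\<^sup>+\<omega>. fh j t (pth (X i) 0 (Suc t) \<omega>) * g (pth (X i) t (N - t) \<omega>) \<partial>M i)
          = (\<integral>\<^sup>+\<omega>. fh j t (pth (X i) 0 (Suc t) \<omega>) \<partial>M i) * (\<integral>\<^sup>+\<omega>. g (pth (X j) 0 (Suc n) \<omega>) \<partial>M j)"
        unfolding Nt by (rule markov_split[OF mf fh_last])
      also have "(\<integral>\<^sup>+\<omega>. g (pth (X j) 0 (Suc n) \<omega>) \<partial>M j) \<le> B"
        unfolding B_def g_def
        by (intro nn_integral_mono eexp_mono mult_left_mono count_le_local) simp
      finally show "(\<integral>\<^sup>+\<omega>. fh j t (pth (X i) 0 (Suc t) \<omega>) * g (pth (X i) t (N - t) \<omega>) \<partial>M i)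
          \<le> (\<integral>\<^sup>+\<omega>. fh j t (pth (X i) 0 (Suc t) \<omega>) \<partial>M i) * B"
        by (simp add: mult_left_mono)
    qed
  qed
  also have "(\<Sum>t<N. (\<integral>\<^sup>+\<omega>. fh j t (pth (X i) 0 (Suc t) \<omega>) \<partial>M i) * B)
      = (\<integral>\<^sup>+\<omega>. (\<Sum>t<N. fh j t (pth (X i) 0 (Suc t) \<omega>)) \<partial>M i) * B"
    by (subst nn_integral_sum) (rule meas_pth_fun[OF mf, where F="fh j t" for t], simp add: sum_distrib_right)
  also have "(\<integral>\<^sup>+\<omega>. (\<Sum>t<N. fh j t (pth (X i) 0 (Suc t) \<omega>)) \<partial>M i) \<le> H"
  proof -
    have "(\<integral>\<^sup>+\<omega>. (\<Sum>t<N. fh j t (pth (X i) 0 (Suc t) \<omega>)) \<partial>M i)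
        \<le> (\<integral>\<^sup>+\<omega>. indicator {\<omega>\<in>space (M i). \<exists>n. X i n \<omega> = j} \<omega> \<partial>M i)"
    proof (rule nn_integral_mono)
      fix \<omega> assume \<omega>: "\<omega> \<in> space (M i)"
      have "(\<Sum>t<N. fh j t (pth (X i) 0 (Suc t) \<omega>)) = of_bool (j \<in> set (pth (X i) 0 N \<omega>))"
        using sum_fh_one[where p="pth (X i) 0 N \<omega>" and j=j] by (simp add: take_pth)
      also have "\<dots> \<le> indicator {\<omega>\<in>space (M i). \<exists>n. X i n \<omega> = j} \<omega>"
        using \<omega> by (auto simp: pth_def split: split_indicator)
      finally show "(\<Sum>t<N. fh j t (pth (X i) 0 (Suc t) \<omega>)) \<le> indicator {\<omega>\<in>space (M i). \<exists>n. X i n \<omega> = j} \<omega>" .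
    qed
    also have "\<dots> = H" unfolding H_def by (rule nn_integral_indicator[OF sets_hit[OF mf]])
    finally show ?thesis .
  qed
  then have "(\<integral>\<^sup>+\<omega>. (\<Sum>t<N. fh j t (pth (X i) 0 (Suc t) \<omega>)) \<partial>M i) * B \<le> H * B"
    by (rule mult_right_mono) simp
  finally show ?thesis unfolding H_def B_def by (simp add: add_left_mono)
qed

lemma count_mono_nat_aux: "count_list (pth Y 0 m \<omega>) j \<le> count_list (pth Y 0 (m + k) \<omega>) j"
  by (induction k) (auto simp: pth_Suc)

lemma count_mono_nat: "m \<le> n \<Longrightarrow> count_list (pth Y 0 m \<omega>) j \<le> count_list (pth Y 0 n \<omega>) j"
  using count_mono_nat_aux[of Y m \<omega> j "n - m"] by simp

lemma hit_bound:
  assumes mf: "markov_family P M X"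
  shows "(\<integral>\<^sup>+\<omega>. eexp (ennreal D * local_time (X i) j \<omega>) \<partial>M i)
    \<le> 1 + emeasure (M i) {\<omega>\<in>space (M i). \<exists>n. X i n \<omega> = j}
          * (\<integral>\<^sup>+\<omega>. eexp (ennreal D * local_time (X j) j \<omega>) \<partial>M j)"
proof -
  define c where "c N \<omega> = eexp (ennreal D * of_nat (count_list (pth (X i) 0 N \<omega>) j))" for N \<omega>
  have inc: "incseq c"
    unfolding c_def incseq_def le_fun_def
    by (intro allI impI eexp_mono mult_left_mono) (auto intro: count_mono_nat)
  have eq: "eexp (ennreal D * local_time (X i) j \<omega>) = (SUP N. c N \<omega>)" for \<omega>
  proof -
    have "eexp (ennreal D * local_time (X i) j \<omega>)
        = eexp (SUP N. ennreal D * of_nat (count_list (pth (X i) 0 N \<omega>) j))"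
      by (simp add: local_time_SUP SUP_mult_left_ennreal)
    also have "\<dots> = (SUP N. c N \<omega>)" unfolding c_def
      by (intro eexp_SUP) (auto simp: incseq_def intro!: mult_left_mono of_nat_mono count_mono_nat)
    finally show ?thesis .
  qed
  have "(\<integral>\<^sup>+\<omega>. eexp (ennreal D * local_time (X i) j \<omega>) \<partial>M i) = (SUP N. \<integral>\<^sup>+\<omega>. c N \<omega> \<partial>M i)"
    unfolding eq by (rule nn_integral_monotone_convergence_SUP[OF inc]) (unfold c_def, rule meas_pth_fun[OF mf])
  also have "\<dots> \<le> 1 + emeasure (M i) {\<omega>\<in>space (M i). \<exists>n. X i n \<omega> = j}
          * (\<integral>\<^sup>+\<omega>. eexp (ennreal D * local_time (X j) j \<omega>) \<partial>M j)"
    unfolding c_def by (rule SUP_least) (rule hit_bound_N[OF mf])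
  finally show ?thesis .
qed


lemma meas_local_time:
  assumes mf: "markov_family P M X"
  shows "local_time (X i) j \<in> borel_measurable (M i)"
proof -
  note [measurable] = mf_meas[OF mf, of i]
  show ?thesis unfolding local_time_def by measurable
qed

lemma meas_sum_local:
  assumes mf: "markov_family P M X"
  shows "(\<lambda>\<omega>. \<Sum>j. ennreal (c j) * local_time (X i) j \<omega>) \<in> borel_measurable (M i)"
  using meas_local_time[OF mf] by measurable

lemma dp_nonneg: "0 \<le> delta_plus Q j"
  by (simp add: delta_plus_def)

lemma Qtot_pos: "nonneg_kernel Q \<Longrightarrow> 0 < Qtot Q j"
  by (simp add: nonneg_kernel_def)

lemma pw_max:
  assumes kernel: "nonneg_kernel Q"
  shows "prod_inf (\<lambda>n. max (Qtot Q (X i n \<omega>)) 1)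
       = eexp (\<Sum>j. ennreal (delta_plus Q j) * local_time (X i) j \<omega>)"
proof -
  have "prod_inf (\<lambda>n. max (Qtot Q (X i n \<omega>)) 1) = eexp (\<Sum>n. ennreal (max (ln (Qtot Q (X i n \<omega>))) 0))"
    by (rule prod_inf_max) (rule Qtot_pos[OF kernel])
  also have "(\<Sum>n. ennreal (max (ln (Qtot Q (X i n \<omega>))) 0)) = (\<Sum>n. ennreal (delta_plus Q (X i n \<omega>)))"
    by (simp add: delta_plus_def delta_def)
  also have "\<dots> = (\<Sum>j. ennreal (delta_plus Q j) * local_time (X i) j \<omega>)"
    unfolding local_time_def
    by (rule suminf_local_swap[symmetric, where Y="\<lambda>n. X i n \<omega>"]) (rule dp_nonneg)
  finally show ?thesis .
qed

lemma pw_le: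
  assumes kernel: "nonneg_kernel Q"
    and fin: "(\<Sum>j. ennreal (delta_plus Q j) * local_time (X i) j \<omega>) \<noteq> \<top>"
  shows "prod_inf (\<lambda>n. Qtot Q (X i n \<omega>)) \<le> prod_inf (\<lambda>n. max (Qtot Q (X i n \<omega>)) 1)"
proof (rule prod_inf_le_max)
  show "0 < Qtot Q (X i n \<omega>)" for n by (rule Qtot_pos[OF kernel])
  have "(\<Sum>n. ennreal (max (ln (Qtot Q (X i n \<omega>))) 0)) = (\<Sum>n. ennreal (delta_plus Q (X i n \<omega>)))"
    by (simp add: delta_plus_def delta_def)
  also have "\<dots> = (\<Sum>j. ennreal (delta_plus Q j) * local_time (X i) j \<omega>)"
    unfolding local_time_def
    by (rule suminf_local_swap[symmetric, where Y="\<lambda>n. X i n \<omega>"]) (rule dp_nonneg)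
  finally show "(\<Sum>n. ennreal (max (ln (Qtot Q (X i n \<omega>))) 0)) \<noteq> \<top>" using fin by simp
qed

lemma fval_le_K:
  assumes kernel: "nonneg_kernel Q" and mf: "markov_family P M X"
    and fin: "(\<integral>\<^sup>+\<omega>. eexp (\<Sum>j. ennreal (delta_plus Q j) * local_time (X i) j \<omega>) \<partial>M i) \<noteq> \<top>"
  shows "fval Q M X i \<le> (\<integral>\<^sup>+\<omega>. eexp (\<Sum>j. ennreal (delta_plus Q j) * local_time (X i) j \<omega>) \<partial>M i)"
proof -
  have "AE \<omega> in M i. eexp (\<Sum>j. ennreal (delta_plus Q j) * local_time (X i) j \<omega>) \<noteq> \<top>"
  proof -
    have fin': "(\<integral>\<^sup>+\<omega>. eexp (\<Sum>j. ennreal (delta_plus Q j) * local_time (X i) j \<omega>) \<partial>M i) \<noteq> \<infinity>"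
      using fin unfolding infinity_ennreal_def .
    show ?thesis using nn_integral_PInf_AE[OF measurable_eexp'[OF meas_sum_local[OF mf]] fin']
      unfolding infinity_ennreal_def .
  qed
  then have "AE \<omega> in M i. prod_inf (\<lambda>n. Qtot Q (X i n \<omega>)) \<le> eexp (\<Sum>j. ennreal (delta_plus Q j) * local_time (X i) j \<omega>)"
  proof eventually_elim
    case (elim \<omega>)
    then have ne: "(\<Sum>j. ennreal (delta_plus Q j) * local_time (X i) j \<omega>) \<noteq> \<top>" by (simp add: eexp_eq_top_iff)
    show ?case using pw_le[where X=X and i=i and \<omega>=\<omega>, OF kernel ne] unfolding pw_max[OF kernel] .
  qed
  then show ?thesis unfolding fval_def by (rule nn_integral_mono_AE)
qed


lemma weighted:
  assumes mf: "markov_family P M X" and Dfin: "summable (delta_plus Q)"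
    and Dpos: "0 < suminf (delta_plus Q)"
  shows "(\<integral>\<^sup>+\<omega>. eexp (\<Sum>j. ennreal (delta_plus Q j) * local_time (X i) j \<omega>) \<partial>M i)
    \<le> (\<Sum>j. ennreal (delta_plus Q j / suminf (delta_plus Q))
            * (\<integral>\<^sup>+\<omega>. eexp (ennreal (suminf (delta_plus Q)) * local_time (X i) j \<omega>) \<partial>M i))"
proof -
  define D where "D = suminf (delta_plus Q)"
  define p where "p j = delta_plus Q j / D" for j
  have p0: "0 \<le> p j" for j using Dpos dp_nonneg[of Q j] by (simp add: p_def D_def)
  have ps: "p sums 1"
  proof -
    have "delta_plus Q sums D" using Dfin by (simp add: D_def summable_sums)
    then have "(\<lambda>j. delta_plus Q j / D) sums (D / D)" by (rule sums_divide)
    then show ?thesis using Dpos by (simp add: p_def[abs_def] D_def)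
  qed
  have eqp: "ennreal (delta_plus Q j) = ennreal (p j) * ennreal D" for j
    using Dpos p0[of j] by (simp add: p_def D_def flip: ennreal_mult)
  have "(\<integral>\<^sup>+\<omega>. eexp (\<Sum>j. ennreal (delta_plus Q j) * local_time (X i) j \<omega>) \<partial>M i)
      \<le> (\<integral>\<^sup>+\<omega>. (\<Sum>j. ennreal (p j) * eexp (ennreal D * local_time (X i) j \<omega>)) \<partial>M i)"
  proof (rule nn_integral_mono)
    fix \<omega>
    have "(\<Sum>j. ennreal (delta_plus Q j) * local_time (X i) j \<omega>) = (\<Sum>j. ennreal (p j) * (ennreal D * local_time (X i) j \<omega>))"
      by (simp add: eqp mult.assoc)
    then show "eexp (\<Sum>j. ennreal (delta_plus Q j) * local_time (X i) j \<omega>) \<le> (\<Sum>j. ennreal (p j) * eexp (ennreal D * local_time (X i) j \<omega>))"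
      using eexp_jensen[OF p0 ps] by simp
  qed
  also have "\<dots> = (\<Sum>j. \<integral>\<^sup>+\<omega>. ennreal (p j) * eexp (ennreal D * local_time (X i) j \<omega>) \<partial>M i)"
    by (rule nn_integral_suminf)
       (intro borel_measurable_times_ennreal borel_measurable_const measurable_eexp' meas_local_time[OF mf])
  also have "\<dots> = (\<Sum>j. ennreal (p j) * (\<integral>\<^sup>+\<omega>. eexp (ennreal D * local_time (X i) j \<omega>) \<partial>M i))"
    by (intro suminf_cong nn_integral_cmult)
       (intro borel_measurable_times_ennreal borel_measurable_const measurable_eexp' meas_local_time[OF mf])
  finally show ?thesis by (simp add: p_def D_def)
qed

lemma sum_p_one:
  assumes Dfin: "summable (delta_plus Q)" and Dpos: "0 < suminf (delta_plus Q)"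
  shows "(\<Sum>j. ennreal (delta_plus Q j / suminf (delta_plus Q))) = 1"
proof -
  have "delta_plus Q sums suminf (delta_plus Q)" using Dfin by (simp add: summable_sums)
  then have "(\<lambda>j. delta_plus Q j / suminf (delta_plus Q)) sums (suminf (delta_plus Q) / suminf (delta_plus Q))"
    by (rule sums_divide)
  then have "(\<lambda>j. delta_plus Q j / suminf (delta_plus Q)) sums 1" using Dpos by simp
  then have "(\<lambda>j. ennreal (delta_plus Q j / suminf (delta_plus Q))) sums ennreal 1"
    using Dpos dp_nonneg[of Q] by (subst sums_ennreal) auto
  then show ?thesis by (simp add: sums_iff)
qed

lemma D_zero:
  assumes Dfin: "summable (delta_plus Q)" and D0: "suminf (delta_plus Q) = 0"
  shows "delta_plus Q j = 0"
  using suminf_eq_zero_iff[OF Dfin dp_nonneg] D0 by simp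

lemma K_D_zero:
  assumes mf: "markov_family P M X" and Dfin: "summable (delta_plus Q)" and D0: "suminf (delta_plus Q) = 0"
  shows "(\<integral>\<^sup>+\<omega>. eexp (\<Sum>j. ennreal (delta_plus Q j) * local_time (X i) j \<omega>) \<partial>M i) = 1"
proof -
  interpret prob_space "M i" by (rule mf_prob[OF mf])
  show ?thesis using D_zero[OF Dfin D0] by (simp add: emeasure_space_1)
qed

lemma part1:
  assumes mf: "markov_family P M X" and Dfin: "summable (delta_plus Q)"
  shows "(\<integral>\<^sup>+\<omega>. eexp (\<Sum>j. ennreal (delta_plus Q j) * local_time (X i) j \<omega>) \<partial>M i)
       \<le> (SUP j. \<integral>\<^sup>+\<omega>. eexp (ennreal (suminf (delta_plus Q)) * local_time (X i) j \<omega>) \<partial>M i)"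
proof (cases "suminf (delta_plus Q) = 0")
  case True
  interpret prob_space "M i" by (rule mf_prob[OF mf])
  show ?thesis using K_D_zero[OF mf Dfin True] True by (simp add: emeasure_space_1)
next
  case False
  then have Dpos: "0 < suminf (delta_plus Q)"
    using suminf_nonneg[OF Dfin dp_nonneg] by simp
  define S where "S = (SUP j. \<integral>\<^sup>+\<omega>. eexp (ennreal (suminf (delta_plus Q)) * local_time (X i) j \<omega>) \<partial>M i)"
  have "(\<integral>\<^sup>+\<omega>. eexp (\<Sum>j. ennreal (delta_plus Q j) * local_time (X i) j \<omega>) \<partial>M i)
      \<le> (\<Sum>j. ennreal (delta_plus Q j / suminf (delta_plus Q))
            * (\<integral>\<^sup>+\<omega>. eexp (ennreal (suminf (delta_plus Q)) * local_time (X i) j \<omega>) \<partial>M i))"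
    by (rule weighted[OF mf Dfin Dpos])
  also have "\<dots> \<le> (\<Sum>j. ennreal (delta_plus Q j / suminf (delta_plus Q)) * S)"
    unfolding S_def by (intro suminf_le mult_left_mono SUP_upper) auto
  also have "\<dots> = S" using sum_p_one[OF Dfin Dpos] by simp
  finally show ?thesis by (simp add: S_def)
qed


lemma hit_tendsto_0:
  assumes mf: "markov_family P M X"
    and esc: "\<forall>N. (\<lambda>i. measure (M i) {\<omega> \<in> space (M i). \<forall>n. N < X i n \<omega>}) \<longlonglongrightarrow> 1"
  shows "(\<lambda>i. measure (M i) {\<omega>\<in>space (M i). \<exists>n. X i n \<omega> = j}) \<longlonglongrightarrow> 0"
proof (rule tendsto_sandwich[where f="\<lambda>_. 0" and h="\<lambda>i. 1 - measure (M i) {\<omega> \<in> space (M i). \<forall>n. j < X i n \<omega>}"])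
  show "\<forall>\<^sub>F i in sequentially. 0 \<le> measure (M i) {\<omega>\<in>space (M i). \<exists>n. X i n \<omega> = j}" by simp
  show "\<forall>\<^sub>F i in sequentially. measure (M i) {\<omega>\<in>space (M i). \<exists>n. X i n \<omega> = j}
       \<le> 1 - measure (M i) {\<omega> \<in> space (M i). \<forall>n. j < X i n \<omega>}"
  proof (rule always_eventually, rule allI)
    fix i
    interpret Pi: prob_space "M i" by (rule mf_prob[OF mf])
    note [measurable] = mf_meas[OF mf, of i]
    have A: "{\<omega>\<in>space (M i). \<exists>n. X i n \<omega> = j} \<in> sets (M i)" by measurable
    have B: "{\<omega> \<in> space (M i). \<forall>n. j < X i n \<omega>} \<in> sets (M i)" by measurable
    have d: "{\<omega>\<in>space (M i). \<exists>n. X i n \<omega> = j} \<inter> {\<omega> \<in> space (M i). \<forall>n. j < X i n \<omega>} = {}" by auto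
    have "measure (M i) {\<omega>\<in>space (M i). \<exists>n. X i n \<omega> = j} + measure (M i) {\<omega> \<in> space (M i). \<forall>n. j < X i n \<omega>}
        = measure (M i) ({\<omega>\<in>space (M i). \<exists>n. X i n \<omega> = j} \<union> {\<omega> \<in> space (M i). \<forall>n. j < X i n \<omega>})"
      by (rule Pi.finite_measure_Union[OF A B d, symmetric])
    also have "\<dots> \<le> 1" by (rule Pi.prob_le_1)
    finally show "measure (M i) {\<omega>\<in>space (M i). \<exists>n. X i n \<omega> = j}
       \<le> 1 - measure (M i) {\<omega> \<in> space (M i). \<forall>n. j < X i n \<omega>}" by simp
  qed
  show "(\<lambda>i. 0::real) \<longlonglongrightarrow> 0" by simp
  have "(\<lambda>i. 1 - measure (M i) {\<omega> \<in> space (M i). \<forall>n. j < X i n \<omega>}) \<longlonglongrightarrow> 1 - 1"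
    using esc by (intro tendsto_diff tendsto_const) auto
  then show "(\<lambda>i. 1 - measure (M i) {\<omega> \<in> space (M i). \<forall>n. j < X i n \<omega>}) \<longlonglongrightarrow> 0" by simp
qed

lemma part3:
  assumes kernel: "nonneg_kernel Q" and mf: "markov_family P M X" and Dfin: "summable (delta_plus Q)"
    and Kfin: "\<And>i. (\<integral>\<^sup>+\<omega>. eexp (\<Sum>j. ennreal (delta_plus Q j) * local_time (X i) j \<omega>) \<partial>M i) \<noteq> \<top>"
    and esc: "\<forall>N. (\<lambda>i. measure (M i) {\<omega> \<in> space (M i). \<forall>n. N < X i n \<omega>}) \<longlonglongrightarrow> 1"
    and Cfin: "(SUP i. \<integral>\<^sup>+\<omega>. eexp (ennreal (suminf (delta_plus Q)) * local_time (X i) i \<omega>) \<partial>M i) < \<infinity>"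
  shows "limsup (fval Q M X) \<le> 1"
proof (cases "suminf (delta_plus Q) = 0")
  case True
  show ?thesis
  proof (rule Limsup_bounded, rule always_eventually, rule allI)
    fix i
    show "fval Q M X i \<le> 1"
      using fval_le_K[OF kernel mf Kfin] K_D_zero[OF mf Dfin True] by simp
  qed
next
  case False
  then have Dpos: "0 < suminf (delta_plus Q)"
    using suminf_nonneg[OF Dfin dp_nonneg] by simp
  define D where "D = suminf (delta_plus Q)"
  define p where "p j = delta_plus Q j / D" for j
  have p0: "0 \<le> p j" for j using Dpos dp_nonneg[of Q j] by (simp add: p_def D_def)
  have ps: "p sums 1"
  proof -
    have "delta_plus Q sums D" using Dfin by (simp add: D_def summable_sums)
    then have "(\<lambda>j. delta_plus Q j / D) sums (D / D)" by (rule sums_divide)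
    then show ?thesis using Dpos by (simp add: p_def[abs_def] D_def)
  qed
  define C where "C = (SUP i. \<integral>\<^sup>+\<omega>. eexp (ennreal D * local_time (X i) i \<omega>) \<partial>M i)"
  have "C \<noteq> \<top>" using Cfin unfolding C_def D_def infinity_ennreal_def by (rule less_imp_neq)
  then obtain c where c: "0 \<le> c" "C = ennreal c" by (cases C) auto
  define h where "h i j = measure (M i) {\<omega>\<in>space (M i). \<exists>n. X i n \<omega> = j}" for i j
  have h0: "0 \<le> h i j" for i j by (simp add: h_def)
  have h1: "h i j \<le> 1" for i j
  proof -
    interpret prob_space "M i" by (rule mf_prob[OF mf])
    show ?thesis by (simp add: h_def)
  qed
  have hE: "emeasure (M i) {\<omega>\<in>space (M i). \<exists>n. X i n \<omega> = j} = ennreal (h i j)" for i j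
  proof -
    interpret prob_space "M i" by (rule mf_prob[OF mf])
    show ?thesis by (simp add: h_def emeasure_eq_measure)
  qed
  define G where "G i = (\<Sum>j. p j * (1 + h i j * c))" for i
  have sumG: "summable (\<lambda>j. p j * (1 + h i j * c))" for i
  proof (rule summable_comparison_test'[where g="\<lambda>j. p j * (1 + c)" and N=0])
    show "summable (\<lambda>j. p j * (1 + c))" using ps by (intro summable_mult2) (simp add: sums_iff)
    fix j
    have "h i j * c \<le> 1 * c" using h1[of i j] c by (intro mult_right_mono) auto
    then have "p j * (1 + h i j * c) \<le> p j * (1 + c)" using p0[of j] by (intro mult_left_mono) auto
    then show "norm (p j * (1 + h i j * c)) \<le> p j * (1 + c)"
      using p0[of j] h0[of i j] c by simp
  qed
  have bound: "fval Q M X i \<le> ennreal (G i)" for i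
  proof -
    have "fval Q M X i \<le> (\<integral>\<^sup>+\<omega>. eexp (\<Sum>j. ennreal (delta_plus Q j) * local_time (X i) j \<omega>) \<partial>M i)"
      by (rule fval_le_K[OF kernel mf Kfin])
    also have "\<dots> \<le> (\<Sum>j. ennreal (p j) * (\<integral>\<^sup>+\<omega>. eexp (ennreal D * local_time (X i) j \<omega>) \<partial>M i))"
      using weighted[OF mf Dfin Dpos] by (simp add: p_def D_def)
    also have "\<dots> \<le> (\<Sum>j. ennreal (p j) * (1 + ennreal (h i j) * C))"
    proof (intro suminf_le mult_left_mono allI)
      fix j
      have "(\<integral>\<^sup>+\<omega>. eexp (ennreal D * local_time (X i) j \<omega>) \<partial>M i)
          \<le> 1 + emeasure (M i) {\<omega>\<in>space (M i). \<exists>n. X i n \<omega> = j}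
             * (\<integral>\<^sup>+\<omega>. eexp (ennreal D * local_time (X j) j \<omega>) \<partial>M j)"
        by (rule hit_bound[OF mf])
      also have "(\<integral>\<^sup>+\<omega>. eexp (ennreal D * local_time (X j) j \<omega>) \<partial>M j) \<le> C"
        unfolding C_def by (rule SUP_upper) simp
      finally show "(\<integral>\<^sup>+\<omega>. eexp (ennreal D * local_time (X i) j \<omega>) \<partial>M i) \<le> 1 + ennreal (h i j) * C"
        by (simp add: hE add_left_mono mult_left_mono)
    qed auto
    also have "\<dots> = (\<Sum>j. ennreal (p j * (1 + h i j * c)))"
      using p0 h0 c by (intro suminf_cong) (simp add: ennreal_mult ennreal_plus)
    also have "\<dots> = ennreal (G i)"
      unfolding G_def using p0 h0 c by (intro suminf_ennreal2 sumG) simp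
    finally show ?thesis .
  qed
  have "G \<longlonglongrightarrow> (\<Sum>j. p j)"
  proof -
    have "(\<lambda>i. \<Sum>j. p j * (1 + h i j * c)) \<longlonglongrightarrow> (\<Sum>j. p j)"
    proof (rule tannerys_theorem[where M="\<lambda>j. p j * (1 + c)", THEN conjunct2, THEN conjunct2])
      fix j
      have "(\<lambda>i. h i j) \<longlonglongrightarrow> 0" unfolding h_def by (rule hit_tendsto_0[OF mf esc])
      then have "(\<lambda>i. p j * (1 + h i j * c)) \<longlonglongrightarrow> p j * (1 + 0 * c)"
        by (intro tendsto_intros)
      then show "(\<lambda>i. p j * (1 + h i j * c)) \<longlonglongrightarrow> p j" by simp
    next
      show "\<forall>\<^sub>F (j, i) in at_top \<times>\<^sub>F sequentially. norm (p j * (1 + h i j * c)) \<le> p j * (1 + c)"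
      proof (rule always_eventually, clarify)
        fix j i
        have "h i j * c \<le> 1 * c" using h1[of i j] c by (intro mult_right_mono) auto
        then have "p j * (1 + h i j * c) \<le> p j * (1 + c)" using p0[of j] by (intro mult_left_mono) auto
        then show "norm (p j * (1 + h i j * c)) \<le> p j * (1 + c)"
          using p0[of j] h0[of i j] c by simp
      qed
    next
      show "summable (\<lambda>j. p j * (1 + c))" using ps by (intro summable_mult2) (simp add: sums_iff)
    qed simp
    then show ?thesis by (simp add: G_def[abs_def])
  qed
  then have "G \<longlonglongrightarrow> 1" using ps by (simp add: sums_iff)
  then have "(\<lambda>i. ennreal (G i)) \<longlonglongrightarrow> ennreal 1" by (rule tendsto_ennrealI)
  then have lim: "limsup (\<lambda>i. ennreal (G i)) = 1"
    by (intro lim_imp_Limsup) simp_all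
  have "limsup (fval Q M X) \<le> limsup (\<lambda>i. ennreal (G i))"
    by (intro Limsup_mono always_eventually allI bound)
  then show ?thesis using lim by simp
qed


theorem proposition3:
  fixes Q :: "nat \<Rightarrow> nat \<Rightarrow> real"
    and M :: "nat \<Rightarrow> 'a measure"
    and X :: "nat \<Rightarrow> nat \<Rightarrow> 'a \<Rightarrow> nat"
  assumes kernel: "nonneg_kernel Q"
    and irred: "irreducible_kernel Q"
    and chain: "markov_family (Pker Q) M X"
    and D_fin: "summable (delta_plus Q)"
  defines "D \<equiv> (\<Sum>j. delta_plus Q j)"
  shows "(\<forall>i. (\<integral>\<^sup>+\<omega>. eexp (\<Sum>j. ennreal (delta_plus Q j) * local_time (X i) j \<omega>) \<partial>M i)
               \<le> (SUP j. \<integral>\<^sup>+\<omega>. eexp (ennreal D * local_time (X i) j \<omega>) \<partial>M i))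
      \<and> ((\<forall>i. (SUP j. \<integral>\<^sup>+\<omega>. eexp (ennreal D * local_time (X i) j \<omega>) \<partial>M i) < \<infinity>) \<longrightarrow>
            condC Q M X
          \<and> (\<forall>i. fval Q M X i \<le> (SUP j. \<integral>\<^sup>+\<omega>. eexp (ennreal D * local_time (X i) j \<omega>) \<partial>M i))
          \<and> (((\<forall>N. (\<lambda>i. measure (M i) {\<omega> \<in> space (M i). \<forall>n. N < X i n \<omega>}) \<longlonglongrightarrow> 1)
               \<and> (SUP i. \<integral>\<^sup>+\<omega>. eexp (ennreal D * local_time (X i) i \<omega>) \<partial>M i) < \<infinity>)
             \<longrightarrow> limsup (fval Q M X) \<le> 1))"
proof -
  have Deq: "D = suminf (delta_plus Q)" by (simp add: D_def)
  define K where "K i = (\<integral>\<^sup>+\<omega>. eexp (\<Sum>j. ennreal (delta_plus Q j) * local_time (X i) j \<omega>) \<partial>M i)" for i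
  define S where "S i = (SUP j. \<integral>\<^sup>+\<omega>. eexp (ennreal D * local_time (X i) j \<omega>) \<partial>M i)" for i
  have P1: "K i \<le> S i" for i
    unfolding K_def S_def Deq by (rule part1[OF chain D_fin])
  have P2: "condC Q M X \<and> (\<forall>i. fval Q M X i \<le> S i)
     \<and> (((\<forall>N. (\<lambda>i. measure (M i) {\<omega> \<in> space (M i). \<forall>n. N < X i n \<omega>}) \<longlonglongrightarrow> 1)
               \<and> (SUP i. \<integral>\<^sup>+\<omega>. eexp (ennreal D * local_time (X i) i \<omega>) \<partial>M i) < \<infinity>)
             \<longrightarrow> limsup (fval Q M X) \<le> 1)"
    if H: "\<forall>i. S i < \<infinity>"
  proof -
    have KS: "K i < \<infinity>" for i using P1[of i] H by (meson le_less_trans)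
    have Kfin: "K i \<noteq> \<top>" for i using KS[of i] by (simp add: infinity_ennreal_def)
    have c1: "condC Q M X"
      unfolding condC_def
    proof
      fix i
      show "(\<integral>\<^sup>+\<omega>. prod_inf (\<lambda>n. max (Qtot Q (X i n \<omega>)) 1) \<partial>M i) < \<infinity>"
        using KS[of i] unfolding K_def pw_max[OF kernel] .
    qed
    have c2: "\<forall>i. fval Q M X i \<le> S i"
    proof
      fix i
      have "fval Q M X i \<le> K i" unfolding K_def by (rule fval_le_K[OF kernel chain Kfin[unfolded K_def]])
      then show "fval Q M X i \<le> S i" using P1[of i] by (rule order_trans)
    qed
    have c3: "limsup (fval Q M X) \<le> 1"
      if "(\<forall>N. (\<lambda>i. measure (M i) {\<omega> \<in> space (M i). \<forall>n. N < X i n \<omega>}) \<longlonglongrightarrow> 1)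
               \<and> (SUP i. \<integral>\<^sup>+\<omega>. eexp (ennreal D * local_time (X i) i \<omega>) \<partial>M i) < \<infinity>"
      using that by (intro part3[OF kernel chain D_fin Kfin[unfolded K_def]]) (simp_all add: Deq)
    show ?thesis using c1 c2 c3 by blast
  qed
  show ?thesis using P1 P2 unfolding K_def S_def by blast
qed


end
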